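(* Let $(A,\cdot)$ be a commutative associative algebra and $(P,Q)$ an admissible pair on it. Then $Q(x)\cdot y-x\cdot Q(y)=P(x)\cdot y-x\cdot P(y)$ for all $x,y\in A$, and the bracket $[x,y]=Q(x)\cdot y-x\cdot Q(y)$ makes $(A,[-,-])$ a Lie algebra. Moreover, if $\mathcal B$ is a symmetric bilinear form on $A$ which is invariant on $(A,\cdot)$, i.e. $\mathcal B(x\cdot y,z)=\mathcal B(x,y\cdot z)$ for all $x,y,z$, then $\mathcal B$ is a commutative 2-cocycle on $(A,[-,-])$.
   Context: All vector spaces are finite-dimensional over a field $\mathbb F$ of characteristic $0$. An admissible pair on a commutative associative algebra $(A,\cdot)$ is a pair of linear maps $P,Q:A\to A$ with $Q(x\cdot y)=Q(x)\cdot y+x\cdot P(y)$ for all $x,y\in A$. A commutative 2-cocycle on a Lie algebra is a symmetric bilinear form $\mathcal B$ with $\mathcal B([x,y],z)+\mathcal B([y,z],x)+\mathcal B([z,x],y)=0$. *)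

theory Defs
  imports Main "HOL.Vector_Spaces"
begin

definition bilinear_map :: "('k::field \<Rightarrow> 'v::ab_group_add \<Rightarrow> 'v) \<Rightarrow> ('k \<Rightarrow> 'w::ab_group_add \<Rightarrow> 'w)
    \<Rightarrow> ('v \<Rightarrow> 'v \<Rightarrow> 'w) \<Rightarrow> bool" where
  "bilinear_map s t f \<longleftrightarrow> (\<forall>x. Vector_Spaces.linear s t (f x)) \<and> (\<forall>y. Vector_Spaces.linear s t (\<lambda>x. f x y))"

definition comm_assoc_algebra :: "('k::field \<Rightarrow> 'v::ab_group_add \<Rightarrow> 'v) \<Rightarrow> ('v \<Rightarrow> 'v \<Rightarrow> 'v) \<Rightarrow> bool" where
  "comm_assoc_algebra s m \<longleftrightarrow> bilinear_map s s m \<and> (\<forall>x y. m x y = m y x)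
     \<and> (\<forall>x y z. m (m x y) z = m x (m y z))"

definition admissible_pair :: "('k::field \<Rightarrow> 'v::ab_group_add \<Rightarrow> 'v) \<Rightarrow> ('v \<Rightarrow> 'v \<Rightarrow> 'v)
    \<Rightarrow> ('v \<Rightarrow> 'v) \<Rightarrow> ('v \<Rightarrow> 'v) \<Rightarrow> bool" where
  "admissible_pair s m P Q \<longleftrightarrow> Vector_Spaces.linear s s P \<and> Vector_Spaces.linear s s Q
     \<and> (\<forall>x y. Q (m x y) = m (Q x) y + m x (P y))"

definition lie_algebra :: "('k::field \<Rightarrow> 'v::ab_group_add \<Rightarrow> 'v) \<Rightarrow> ('v \<Rightarrow> 'v \<Rightarrow> 'v) \<Rightarrow> bool" where
  "lie_algebra s br \<longleftrightarrow> bilinear_map s s br \<and> (\<forall>x. br x x = 0)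
     \<and> (\<forall>x y z. br x (br y z) + br y (br z x) + br z (br x y) = 0)"

definition commutative_2cocycle :: "('k::field \<Rightarrow> 'v::ab_group_add \<Rightarrow> 'v) \<Rightarrow> ('v \<Rightarrow> 'v \<Rightarrow> 'v)
    \<Rightarrow> ('v \<Rightarrow> 'v \<Rightarrow> 'k) \<Rightarrow> bool" where
  "commutative_2cocycle s br B \<longleftrightarrow> bilinear_map s (*) B \<and> (\<forall>x y. B x y = B y x)
     \<and> (\<forall>x y z. B (br x y) z + B (br y z) x + B (br z x) y = 0)"

end

theory Submission
  imports Defs
begin

lemma jac:
  fixes m :: "'v::ab_group_add \<Rightarrow> 'v \<Rightarrow> 'v" and P Q :: "'v \<Rightarrow> 'v"
  assumes aL: "\<And>a b c. m (a+b) c = m a c + m b c"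
    and aR: "\<And>a b c. m a (b+c) = m a b + m a c"
    and dL: "\<And>a b c. m (a-b) c = m a c - m b c"
    and dR: "\<And>a b c. m a (b-c) = m a b - m a c"
    and Qa: "\<And>a b. Q (a+b) = Q a + Q b"
    and Qd: "\<And>a b. Q (a-b) = Q a - Q b"
    and cm: "\<And>a b. m a b = m b a"
    and as: "\<And>a b c. m (m a b) c = m a (m b c)"
    and ad: "\<And>a b. Q (m a b) = m (Q a) b + m a (P b)"
    and D: "\<And>a b. m (Q a) b - m a (Q b) = m (P a) b - m a (P b)"
  shows "m (Q x) (m (Q y) z - m y (Q z)) - m x (Q (m (Q y) z - m y (Q z)))
       + (m (Q y) (m (Q z) x - m z (Q x)) - m y (Q (m (Q z) x - m z (Q x))))
       + (m (Q z) (m (Q x) y - m x (Q y)) - m z (Q (m (Q x) y - m x (Q y)))) = 0"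
proof -
  have lc: "\<And>a b c. m a (m b c) = m b (m a c)" by (metis as cm)
  have e1: "m (m (Q x) y - m x (Q y)) (P z) = m (m (P x) y - m x (P y)) (P z)" using D by simp
  have e2: "m (m (Q y) z - m y (Q z)) (P x) = m (m (P y) z - m y (P z)) (P x)" using D by simp
  have e3: "m (m (Q z) x - m z (Q x)) (P y) = m (m (P z) x - m z (P x)) (P y)" using D by simp
  note N = dL dR aL aR Qa Qd ad as cm lc
  have e1': "m (Q x) (m y (P z)) - m x (m (Q y) (P z)) = m (P x) (m y (P z)) - m x (m (P y) (P z))"
    using e1 by (simp add: dL as)
  have e2': "m (Q y) (m z (P x)) - m y (m (Q z) (P x)) = m (P y) (m z (P x)) - m y (m (P z) (P x))"
    using e2 by (simp add: dL as)
  have e3': "m (Q z) (m x (P y)) - m z (m (Q x) (P y)) = m (P z) (m x (P y)) - m z (m (P x) (P y))"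
    using e3 by (simp add: dL as)
  show ?thesis using e1' e2' e3' by (simp add: N algebra_simps)
qed

theorem proposition3p24:
  fixes scale :: "'k::field_char_0 \<Rightarrow> 'v::ab_group_add \<Rightarrow> 'v"
    and mult :: "'v \<Rightarrow> 'v \<Rightarrow> 'v"
    and P Q :: "'v \<Rightarrow> 'v"
  assumes vs: "vector_space scale"
    and fd: "\<exists>basis. finite_dimensional_vector_space scale basis"
    and alg: "comm_assoc_algebra scale mult"
    and adm: "admissible_pair scale mult P Q"
  shows "(\<forall>x y. mult (Q x) y - mult x (Q y) = mult (P x) y - mult x (P y))
    \<and> lie_algebra scale (\<lambda>x y. mult (Q x) y - mult x (Q y))
    \<and> (\<forall>B :: 'v \<Rightarrow> 'v \<Rightarrow> 'k. bilinear_map scale (*) B \<and> (\<forall>x y. B x y = B y x)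
          \<and> (\<forall>x y z. B (mult x y) z = B x (mult y z))
        \<longrightarrow> commutative_2cocycle scale (\<lambda>x y. mult (Q x) y - mult x (Q y)) B)"
proof -
  have bm: "bilinear_map scale scale mult" and cm: "\<And>a b. mult a b = mult b a"
    and as: "\<And>a b c. mult (mult a b) c = mult a (mult b c)"
    using alg unfolding comm_assoc_algebra_def by auto
  have LQ: "Vector_Spaces.linear scale scale Q" and LP: "Vector_Spaces.linear scale scale P"
    and ad: "\<And>a b. Q (mult a b) = mult (Q a) b + mult a (P b)"
    using adm unfolding admissible_pair_def by auto
  have L1: "\<And>y. Vector_Spaces.linear scale scale (\<lambda>x. mult x y)"
    and L2: "\<And>x. Vector_Spaces.linear scale scale (mult x)"
    using bm unfolding bilinear_map_def by auto
  have MH: "\<And>f. Vector_Spaces.linear scale scale f \<Longrightarrow> module_hom scale scale f"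
    by (simp add: linear_iff_module_hom)
  have aL: "\<And>a b c. mult (a+b) c = mult a c + mult b c"
    using module_hom.add[OF MH[OF L1]] by blast
  have aR: "\<And>a b c. mult a (b+c) = mult a b + mult a c"
    using module_hom.add[OF MH[OF L2]] by blast
  have dL: "\<And>a b c. mult (a-b) c = mult a c - mult b c"
    using module_hom.diff[OF MH[OF L1]] by blast
  have dR: "\<And>a b c. mult a (b-c) = mult a b - mult a c"
    using module_hom.diff[OF MH[OF L2]] by blast
  have Qa: "\<And>a b. Q (a+b) = Q a + Q b" using module_hom.add[OF MH[OF LQ]] by blast
  have Qd: "\<And>a b. Q (a-b) = Q a - Q b" using module_hom.diff[OF MH[OF LQ]] by blast
  have D: "\<And>a b. mult (Q a) b - mult a (Q b) = mult (P a) b - mult a (P b)"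
  proof -
    fix a b
    have "Q (mult a b) = Q (mult b a)" using cm by simp
    hence "mult (Q a) b + mult a (P b) = mult (Q b) a + mult b (P a)" by (simp add: ad)
    thus "mult (Q a) b - mult a (Q b) = mult (P a) b - mult a (P b)"
      using cm[of a "Q b"] cm[of b "P a"] by (simp add: algebra_simps)
  qed
  have mp: "module_pair scale scale"
    using vs by (simp add: module_pair_def module_iff_vector_space)
  have bl: "bilinear_map scale scale (\<lambda>x y. mult (Q x) y - mult x (Q y))"
    unfolding bilinear_map_def
  proof (intro conjI allI)
    fix x
    have "module_hom scale scale (\<lambda>y. mult (Q x) y - mult x (Q y))"
      apply (rule module_pair.module_hom_sub[OF mp])
       apply (rule MH[OF L2])
      using MH[OF Vector_Spaces.linear_compose[OF LQ L2[of x]]] by (simp add: o_def)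
    thus "Vector_Spaces.linear scale scale (\<lambda>y. mult (Q x) y - mult x (Q y))"
      by (simp add: module_hom_iff_linear)
  next
    fix y
    have "module_hom scale scale (\<lambda>x. mult (Q x) y - mult x (Q y))"
      apply (rule module_pair.module_hom_sub[OF mp])
      using MH[OF Vector_Spaces.linear_compose[OF LQ L1[of y]]] apply (simp add: o_def)
      by (rule MH[OF L1])
    thus "Vector_Spaces.linear scale scale (\<lambda>x. mult (Q x) y - mult x (Q y))"
      by (simp add: module_hom_iff_linear)
  qed
  have lie: "lie_algebra scale (\<lambda>x y. mult (Q x) y - mult x (Q y))"
    unfolding lie_algebra_def
  proof (intro conjI allI)
    fix x show "mult (Q x) x - mult x (Q x) = 0" using cm[of x "Q x"] by simp
  next
    fix x y z
    show "mult (Q x) (mult (Q y) z - mult y (Q z)) - mult x (Q (mult (Q y) z - mult y (Q z))) +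
      (mult (Q y) (mult (Q z) x - mult z (Q x)) - mult y (Q (mult (Q z) x - mult z (Q x)))) +
      (mult (Q z) (mult (Q x) y - mult x (Q y)) - mult z (Q (mult (Q x) y - mult x (Q y)))) = 0"
      by (rule jac[OF aL aR dL dR Qa Qd cm as ad D])
  qed (rule bl)
  have coc: "commutative_2cocycle scale (\<lambda>x y. mult (Q x) y - mult x (Q y)) B"
    if hB: "bilinear_map scale (*) B" "\<forall>x y. B x y = B y x" "\<forall>x y z. B (mult x y) z = B x (mult y z)"
    for B :: "'v \<Rightarrow> 'v \<Rightarrow> 'k"
  proof -
    have LB: "Vector_Spaces.linear scale (*) (\<lambda>x. B x y)" for y
      using hB(1) unfolding bilinear_map_def by auto
    have bd: "B (a - b) c = B a c - B b c" for a b c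
      using module_hom.diff[OF LB[of c, unfolded linear_iff_module_hom]] by blast
    define T where "T a b c = B (mult a b) c" for a b c
    have T1: "T a b c = T b a c" for a b c unfolding T_def using cm by simp
    have T2: "T a b c = T a c b" for a b c unfolding T_def using hB(2,3) cm
      by (metis)
    show ?thesis unfolding commutative_2cocycle_def
    proof (intro conjI allI)
      fix x y z
      have "B (mult (Q x) y - mult x (Q y)) z + B (mult (Q y) z - mult y (Q z)) x
         + B (mult (Q z) x - mult z (Q x)) y
         = T (Q x) y z - T x (Q y) z + (T (Q y) z x - T y (Q z) x) + (T (Q z) x y - T z (Q x) y)"
        unfolding T_def bd ..
      also have "\<dots> = 0" using T1 T2 by (metis (no_types, lifting) add_diff_cancel_left' add_diff_eq diff_add_cancel diff_self)
      finally show "B (mult (Q x) y - mult x (Q y)) z + B (mult (Q y) z - mult y (Q z)) x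
         + B (mult (Q z) x - mult z (Q x)) y = 0" .
    qed (use hB in auto)
  qed
  show ?thesis using D lie coc by blast
qed

end
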